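(* Let $\mathcal D$ be universal, $\mathrm M=(M,d)\in\mathfrak U_{\mathcal D}$, and $r\in\mathcal D$, $r>0$, with $(r,2r]\cap\mathcal D=\emptyset$. Let $A_0,\dots,A_{n-1}$ be pairwise distinct $\sim_r$-equivalence classes. Then there exist points $a_i\in A_i$ ($i<n$) with $d(a_i,a_j)=d_{\min}(A_i,A_j)$ for all $i,j<n$.
   Context: $\mathcal D$ is a finite subset of $\mathbb R_{\ge0}$ containing $0$. $\mathfrak U_{\mathcal D}$ is the class of countable homogeneous metric spaces (every isometry between finite subspaces extends to an isometry of the space onto itself) with distance set exactly $\mathcal D$ into which every finite metric space with distances in $\mathcal D$ embeds isometrically; $\mathcal D$ is universal if this class is nonempty. $x\sim_r y$ iff $d(x,y)\le r$. For $A,B\subseteq M$, $d_{\min}(A,B)=\min\{d(a,b):a\in A,b\in B\}$. *)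

theory Defs
  imports "HOL-Analysis.Analysis"
begin

definition metric_on :: "'a set \<Rightarrow> ('a \<Rightarrow> 'a \<Rightarrow> real) \<Rightarrow> bool" where
  "metric_on M d \<longleftrightarrow>
     (\<forall>x\<in>M. d x x = 0) \<and>
     (\<forall>x\<in>M. \<forall>y\<in>M. x \<noteq> y \<longrightarrow> d x y > 0) \<and>
     (\<forall>x\<in>M. \<forall>y\<in>M. d x y = d y x) \<and>
     (\<forall>x\<in>M. \<forall>y\<in>M. \<forall>z\<in>M. d x z \<le> d x y + d y z)"

definition dist_set :: "'a set \<Rightarrow> ('a \<Rightarrow> 'a \<Rightarrow> real) \<Rightarrow> real set" where
  "dist_set M d = {d x y | x y. x \<in> M \<and> y \<in> M}"

definition homogeneous_space :: "'a set \<Rightarrow> ('a \<Rightarrow> 'a \<Rightarrow> real) \<Rightarrow> bool" where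
  "homogeneous_space M d \<longleftrightarrow>
     (\<forall>X Y f. finite X \<and> X \<subseteq> M \<and> Y \<subseteq> M \<and> bij_betw f X Y \<and>
        (\<forall>x\<in>X. \<forall>y\<in>X. d (f x) (f y) = d x y) \<longrightarrow>
        (\<exists>g. bij_betw g M M \<and> (\<forall>x\<in>M. \<forall>y\<in>M. d (g x) (g y) = d x y) \<and>
             (\<forall>x\<in>X. g x = f x)))"

text \<open>Every finite metric space with distances in D embeds isometrically into (M,d).
  Finite metric spaces are represented (up to isometry) on carriers {..<k}.\<close>
definition finitely_universal :: "real set \<Rightarrow> 'a set \<Rightarrow> ('a \<Rightarrow> 'a \<Rightarrow> real) \<Rightarrow> bool" where
  "finitely_universal D M d \<longleftrightarrow>
     (\<forall>(k::nat) (e::nat \<Rightarrow> nat \<Rightarrow> real).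
        metric_on {..<k} e \<and> (\<forall>i<k. \<forall>j<k. e i j \<in> D) \<longrightarrow>
        (\<exists>f. (\<forall>i<k. f i \<in> M) \<and> (\<forall>i<k. \<forall>j<k. d (f i) (f j) = e i j)))"

definition in_U :: "real set \<Rightarrow> 'a set \<Rightarrow> ('a \<Rightarrow> 'a \<Rightarrow> real) \<Rightarrow> bool" where
  "in_U D M d \<longleftrightarrow> countable M \<and> metric_on M d \<and> homogeneous_space M d \<and>
     dist_set M d = D \<and> finitely_universal D M d"

text \<open>D is universal: U_D is nonempty (countable spaces may be taken on subsets of nat).\<close>
definition universal_dist_set :: "real set \<Rightarrow> bool" where
  "universal_dist_set D \<longleftrightarrow> (\<exists>(N::nat set) e. in_U D N e)"

definition sim_r :: "('a \<Rightarrow> 'a \<Rightarrow> real) \<Rightarrow> real \<Rightarrow> 'a \<Rightarrow> 'a \<Rightarrow> bool" where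
  "sim_r d r x y \<longleftrightarrow> d x y \<le> r"

definition sim_classes :: "'a set \<Rightarrow> ('a \<Rightarrow> 'a \<Rightarrow> real) \<Rightarrow> real \<Rightarrow> 'a set set" where
  "sim_classes M d r = {{y \<in> M. sim_r d r x y} | x. x \<in> M}"

definition d_min :: "('a \<Rightarrow> 'a \<Rightarrow> real) \<Rightarrow> 'a set \<Rightarrow> 'a set \<Rightarrow> real" where
  "d_min d A B = Min {d a b | a b. a \<in> A \<and> b \<in> B}"

end

theory Submission
  imports Defs
begin

locale L3 =
  fixes D :: "real set" and M :: "'a set" and d :: "'a \<Rightarrow> 'a \<Rightarrow> real"
    and r :: real and n :: nat and A :: "nat \<Rightarrow> 'a set"
  assumes finD: "finite D" and U: "in_U D M d"
    and rD: "r \<in> D" and rpos: "r > 0" and gap: "{r<..2*r} \<inter> D = {}"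
    and cls: "\<forall>i<n. A i \<in> sim_classes M d r"
    and injA: "inj_on A {..<n}"
begin

lemma met: "metric_on M d" using U by (simp add: in_U_def)
lemma d0: "x \<in> M \<Longrightarrow> d x x = 0" using met by (simp add: metric_on_def)
lemma dpos: "x \<in> M \<Longrightarrow> y \<in> M \<Longrightarrow> x \<noteq> y \<Longrightarrow> d x y > 0" using met by (simp add: metric_on_def)
lemma dsym: "x \<in> M \<Longrightarrow> y \<in> M \<Longrightarrow> d x y = d y x" using met by (simp add: metric_on_def)
lemma dtri: "x \<in> M \<Longrightarrow> y \<in> M \<Longrightarrow> z \<in> M \<Longrightarrow> d x z \<le> d x y + d y z"
  using met unfolding metric_on_def by blast
lemma dnn: "x \<in> M \<Longrightarrow> y \<in> M \<Longrightarrow> 0 \<le> d x y"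
  using dtri[of x y x] dsym[of x y] d0[of x] by simp
lemma dD: "x \<in> M \<Longrightarrow> y \<in> M \<Longrightarrow> d x y \<in> D"
  using U unfolding in_U_def dist_set_def by blast
lemma zD: "0 \<in> D"
proof -
  have "r \<in> dist_set M d" using U rD by (simp add: in_U_def)
  then obtain x y where "x \<in> M" unfolding dist_set_def by blast
  then show ?thesis using dD[of x x] d0[of x] by simp
qed
lemma gapD: "t \<in> D \<Longrightarrow> t \<le> 2*r \<Longrightarrow> t \<le> r"
  using gap by (metis IntI empty_iff greaterThanAtMost_iff not_le)

lemma ext_set:
  assumes fS: "finite S" and SM: "S \<subseteq> M" and hD: "\<forall>x\<in>S. h x \<in> D" and hpos: "\<forall>x\<in>S. h x > 0"
    and t1: "\<forall>x\<in>S. \<forall>y\<in>S. d x y \<le> h x + h y"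
    and t2: "\<forall>x\<in>S. \<forall>y\<in>S. h x \<le> d x y + h y"
  shows "\<exists>z\<in>M. \<forall>x\<in>S. d z x = h x"
proof -
  define k where "k = card S"
  obtain s where s: "bij_betw s {..<k} S" using ex_bij_betw_nat_finite[OF fS]
    unfolding k_def atLeast0LessThan by blast
  have sS: "i < k \<Longrightarrow> s i \<in> S" for i using bij_betw_apply[OF s] by simp
  have sM: "i < k \<Longrightarrow> s i \<in> M" for i using sS SM by blast
  have sinj: "i < k \<Longrightarrow> j < k \<Longrightarrow> s i = s j \<Longrightarrow> i = j" for i j
    using bij_betw_imp_inj_on[OF s] by (simp add: inj_on_def)
  have ssurj: "x \<in> S \<Longrightarrow> \<exists>i<k. s i = x" for x
    using bij_betw_imp_surj_on[OF s] by force
  define e where "e = (\<lambda>i j. if i<k \<and> j<k then d (s i) (s j) else if i<k \<and> j=k then h (s i)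
      else if i = k \<and> j<k then h (s j) else 0)"
  have P1: "d (s i) (s j) \<le> h (s i) + h (s j)" if "i<k" "j<k" for i j using t1 sS that by blast
  have P2: "h (s i) \<le> d (s i) (s j) + h (s j)" if "i<k" "j<k" for i j using t2 sS that by blast
  have P3: "h (s i) \<le> d (s j) (s i) + h (s j)" if "i<k" "j<k" for i j
    using P2[OF that] dsym[OF sM sM, OF that] by simp
  have dps: "i<k \<Longrightarrow> j<k \<Longrightarrow> i \<noteq> j \<Longrightarrow> d (s i) (s j) > 0" for i j
    using dpos[OF sM sM] sinj by blast
  have hp: "i<k \<Longrightarrow> h (s i) > 0" for i using hpos sS by blast
  have emet: "metric_on {..<Suc k} e"
    unfolding metric_on_def
  proof (intro conjI ballI impI)
    fix x assume "x \<in> {..<Suc k}" then show "e x x = 0" using d0[OF sM] by (simp add: e_def)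
  next
    fix x y assume xy: "x \<in> {..<Suc k}" "y \<in> {..<Suc k}" "x \<noteq> y"
    then have c: "x < k \<or> x = k" "y < k \<or> y = k" by auto
    show "e x y > 0"
    proof (cases "x < k")
      case True then show ?thesis using c xy(3) dps hp by (cases "y < k") (simp_all add: e_def)
    next
      case False then show ?thesis using c xy(3) dps hp by (cases "y < k") (simp_all add: e_def)
    qed
  next
    fix x y assume xy: "x \<in> {..<Suc k}" "y \<in> {..<Suc k}"
    then have c: "x < k \<or> x = k" "y < k \<or> y = k" by auto
    show "e x y = e y x"
    proof (cases "x < k")
      case True then show ?thesis using c dsym[OF sM sM] by (cases "y < k") (simp_all add: e_def)
    next
      case False then show ?thesis using c by (cases "y < k") (simp_all add: e_def)
    qed
  next
    fix x y z assume "x \<in> {..<Suc k}" "y \<in> {..<Suc k}" "z \<in> {..<Suc k}"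
    then have c: "x < k \<or> x = k" "y < k \<or> y = k" "z < k \<or> z = k" by auto
    show "e x z \<le> e x y + e y z"
    proof (cases "x < k")
      case xk: True
      show ?thesis
      proof (cases "y < k")
        case yk: True
        show ?thesis
        proof (cases "z < k")
          case True then show ?thesis using xk yk dtri[OF sM sM sM] by (simp add: e_def)
        next
          case False then have "z = k" using c by auto
          then show ?thesis using xk yk P2 by (simp add: e_def)
        qed
      next
        case False then have yk: "y = k" using c by auto
        show ?thesis
        proof (cases "z < k")
          case True then show ?thesis using xk yk P1 by (simp add: e_def)
        next
          case False then have "z = k" using c by auto
          then show ?thesis using xk yk by (simp add: e_def)
        qed
      qed
    next
      case False then have xk: "x = k" using c by auto
      show ?thesis
      proof (cases "y < k")
        case yk: True
        show ?thesis
        proof (cases "z < k")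
          case True then show ?thesis using xk yk P3[of z y] by (simp add: e_def)
        next
          case False then have "z = k" using c by auto
          then show ?thesis using xk yk hp[OF yk] by (simp add: e_def)
        qed
      next
        case False then have yk: "y = k" using c by auto
        show ?thesis using xk yk by (simp add: e_def)
      qed
    qed
  qed
  have eD: "\<forall>i<Suc k. \<forall>j<Suc k. e i j \<in> D"
  proof (intro allI impI)
    fix i j assume "i < Suc k" "j < Suc k"
    show "e i j \<in> D" unfolding e_def using dD[OF sM sM] hD sS zD by auto
  qed
  have fu: "finitely_universal D M d" using U by (simp add: in_U_def)
  have "\<exists>f. (\<forall>i<Suc k. f i \<in> M) \<and> (\<forall>i<Suc k. \<forall>j<Suc k. d (f i) (f j) = e i j)"
    using fu[unfolded finitely_universal_def, rule_format, OF conjI[OF emet eD]] .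
  then obtain f where fM: "\<forall>i<Suc k. f i \<in> M" and fd: "\<forall>i<Suc k. \<forall>j<Suc k. d (f i) (f j) = e i j"
    by blast
  have finj: "inj_on f {..<k}"
  proof (rule inj_onI)
    fix i j assume ij: "i \<in> {..<k}" "j \<in> {..<k}" "f i = f j"
    show "i = j"
    proof (rule ccontr)
      assume "i \<noteq> j"
      then have "e i j > 0" using ij dps by (auto simp: e_def)
      moreover have "e i j = d (f j) (f j)" using fd ij by (metis lessThan_iff less_Suc_eq)
      moreover have "d (f j) (f j) = 0" using d0 fM ij by auto
      ultimately show False by simp
    qed
  qed
  define X where "X = f ` {..<k}"
  define \<phi> where "\<phi> = s \<circ> inv_into {..<k} f"
  have b1: "bij_betw (inv_into {..<k} f) X {..<k}"
    unfolding X_def by (rule bij_betw_inv_into[OF inj_on_imp_bij_betw[OF finj]])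
  have bphi: "bij_betw \<phi> X S" unfolding \<phi>_def by (rule bij_betw_trans[OF b1 s])
  have phif: "i < k \<Longrightarrow> \<phi> (f i) = s i" for i unfolding \<phi>_def using inv_into_f_f[OF finj] by simp
  have iso: "\<forall>x\<in>X. \<forall>y\<in>X. d (\<phi> x) (\<phi> y) = d x y"
  proof (intro ballI)
    fix x y assume "x \<in> X" "y \<in> X"
    then obtain i j where ij: "i < k" "j < k" "x = f i" "y = f j" unfolding X_def by auto
    then show "d (\<phi> x) (\<phi> y) = d x y" using phif fd by (simp add: e_def)
  qed
  have XM: "X \<subseteq> M" unfolding X_def using fM by auto
  have hom: "homogeneous_space M d" using U by (simp add: in_U_def)
  have fX: "finite X" unfolding X_def by simp
  have "\<exists>g. bij_betw g M M \<and> (\<forall>x\<in>M. \<forall>y\<in>M. d (g x) (g y) = d x y) \<and> (\<forall>x\<in>X. g x = \<phi> x)"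
    using hom[unfolded homogeneous_space_def, rule_format, OF conjI[OF fX conjI[OF XM conjI[OF SM conjI[OF bphi iso]]]]] .
  then obtain g where gb: "bij_betw g M M" and giso: "\<forall>x\<in>M. \<forall>y\<in>M. d (g x) (g y) = d x y"
    and gphi: "\<forall>x\<in>X. g x = \<phi> x" by blast
  have fkM: "f k \<in> M" using fM by simp
  show ?thesis
  proof (intro bexI ballI)
    show "g (f k) \<in> M" using bij_betw_apply[OF gb fkM] .
    fix x assume "x \<in> S"
    then obtain i where i: "i < k" "s i = x" using ssurj by blast
    have "g (f i) = x" using gphi phif i unfolding X_def by auto
    then have "d (g (f k)) x = d (g (f k)) (g (f i))" by simp
    also have "\<dots> = d (f k) (f i)" using giso fM i by auto
    also have "\<dots> = e k i" using fd i by auto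
    also have "\<dots> = h x" using i by (simp add: e_def)
    finally show "d (g (f k)) x = h x" .
  qed
qed


lemma Ai: "i < n \<Longrightarrow> A i \<in> sim_classes M d r" using cls by blast

lemma cl_form: "C \<in> sim_classes M d r \<Longrightarrow> \<exists>x\<in>M. C = {y\<in>M. d x y \<le> r}"
  unfolding sim_classes_def sim_r_def by blast

lemma cl_sub: "C \<in> sim_classes M d r \<Longrightarrow> C \<subseteq> M" using cl_form by blast
lemma cl_ne: "C \<in> sim_classes M d r \<Longrightarrow> C \<noteq> {}"
proof -
  assume "C \<in> sim_classes M d r"
  then obtain x where "x \<in> M" "C = {y\<in>M. d x y \<le> r}" using cl_form by blast
  then have "x \<in> C" using d0 rpos by simp
  then show ?thesis by blast
qed

lemma cl_close: "C \<in> sim_classes M d r \<Longrightarrow> u \<in> C \<Longrightarrow> v \<in> C \<Longrightarrow> d u v \<le> r"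
proof -
  assume "C \<in> sim_classes M d r" "u \<in> C" "v \<in> C"
  then obtain x where x: "x \<in> M" "C = {y\<in>M. d x y \<le> r}" using cl_form by blast
  then have uv: "u \<in> M" "v \<in> M" "d x u \<le> r" "d x v \<le> r" using \<open>u \<in> C\<close> \<open>v \<in> C\<close> by auto
  have "d u v \<le> d u x + d x v" using dtri uv x by blast
  also have "d u x = d x u" using dsym uv x by simp
  finally have "d u v \<le> 2 * r" using uv by simp
  then show ?thesis using gapD dD uv by blast
qed

lemma cl_ext: "C \<in> sim_classes M d r \<Longrightarrow> u \<in> C \<Longrightarrow> v \<in> M \<Longrightarrow> d u v \<le> r \<Longrightarrow> v \<in> C"
proof -
  assume a: "C \<in> sim_classes M d r" "u \<in> C" "v \<in> M" "d u v \<le> r"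
  then obtain x where x: "x \<in> M" "C = {y\<in>M. d x y \<le> r}" using cl_form by blast
  then have u: "u \<in> M" "d x u \<le> r" using a by auto
  have "d x v \<le> d x u + d u v" using dtri u x a by blast
  then have "d x v \<le> 2 * r" using u a by simp
  then have "d x v \<le> r" using gapD dD x a by blast
  then show ?thesis using x a by simp
qed

lemma cl_eq: "C \<in> sim_classes M d r \<Longrightarrow> C' \<in> sim_classes M d r \<Longrightarrow> u \<in> C \<Longrightarrow> u \<in> C' \<Longrightarrow> C = C'"
proof -
  assume a: "C \<in> sim_classes M d r" "C' \<in> sim_classes M d r" "u \<in> C" "u \<in> C'"
  have "w \<in> C'" if "w \<in> C" for w using cl_ext[OF a(2) a(4)] cl_close[OF a(1) a(3) that] cl_sub[OF a(1)] that by blast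
  moreover have "w \<in> C" if "w \<in> C'" for w using cl_ext[OF a(1) a(3)] cl_close[OF a(2) a(4) that] cl_sub[OF a(2)] that by blast
  ultimately show ?thesis by blast
qed

lemma disj: "i < n \<Longrightarrow> j < n \<Longrightarrow> i \<noteq> j \<Longrightarrow> u \<in> A i \<Longrightarrow> v \<in> A j \<Longrightarrow> d u v > r"
proof (rule ccontr)
  assume a: "i < n" "j < n" "i \<noteq> j" "u \<in> A i" "v \<in> A j" "\<not> d u v > r"
  then have "v \<in> A i" using cl_ext[OF Ai[OF a(1)] a(4)] cl_sub[OF Ai[OF a(2)]] by auto
  then have "A i = A j" using cl_eq[OF Ai[OF a(1)] Ai[OF a(2)]] a by blast
  then show False using injA a by (simp add: inj_on_def)
qed

definition dl where "dl i j = d_min d (A i) (A j)"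

lemma Sfin: "i < n \<Longrightarrow> j < n \<Longrightarrow> finite {d a b | a b. a \<in> A i \<and> b \<in> A j}"
proof -
  assume ij: "i < n" "j < n"
  have "{d a b | a b. a \<in> A i \<and> b \<in> A j} \<subseteq> D"
  proof
    fix x assume "x \<in> {d a b | a b. a \<in> A i \<and> b \<in> A j}"
    then obtain a b where ab: "x = d a b" "a \<in> A i" "b \<in> A j" by blast
    have "a \<in> M" using cl_sub[OF Ai[OF ij(1)]] ab by blast
    moreover have "b \<in> M" using cl_sub[OF Ai[OF ij(2)]] ab by blast
    ultimately show "x \<in> D" using dD ab by simp
  qed
  then show ?thesis using finD finite_subset by blast
qed

lemma Sne: "i < n \<Longrightarrow> j < n \<Longrightarrow> {d a b | a b. a \<in> A i \<and> b \<in> A j} \<noteq> {}"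
proof -
  assume ij: "i < n" "j < n"
  obtain a where "a \<in> A i" using cl_ne[OF Ai[OF ij(1)]] by blast
  moreover obtain b where "b \<in> A j" using cl_ne[OF Ai[OF ij(2)]] by blast
  ultimately show ?thesis by blast
qed

lemma F1: "i < n \<Longrightarrow> j < n \<Longrightarrow> u \<in> A i \<Longrightarrow> v \<in> A j \<Longrightarrow> dl i j \<le> d u v"
  unfolding dl_def d_min_def by (rule Min_le[OF Sfin]) blast+

lemma F2: "i < n \<Longrightarrow> j < n \<Longrightarrow> \<exists>u\<in>A i. \<exists>v\<in>A j. d u v = dl i j"
proof -
  assume a: "i < n" "j < n"
  have "dl i j \<in> {d a b | a b. a \<in> A i \<and> b \<in> A j}" unfolding dl_def d_min_def
    by (rule Min_in[OF Sfin[OF a] Sne[OF a]])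
  then obtain u v where "dl i j = d u v" "u \<in> A i" "v \<in> A j" by blast
  then show ?thesis by force
qed

lemma F3: "i < n \<Longrightarrow> j < n \<Longrightarrow> dl i j \<in> D"
proof -
  assume a: "i < n" "j < n"
  obtain u v where uv: "u \<in> A i" "v \<in> A j" "d u v = dl i j" using F2[OF a] by blast
  have "u \<in> M" "v \<in> M" using cl_sub[OF Ai] a uv by blast+
  then show ?thesis using dD uv by metis
qed

lemma F5: "i < n \<Longrightarrow> j < n \<Longrightarrow> i \<noteq> j \<Longrightarrow> dl i j > r"
proof -
  assume a: "i < n" "j < n" "i \<noteq> j"
  obtain u v where uv: "u \<in> A i" "v \<in> A j" "d u v = dl i j" using F2[OF a(1,2)] by blast
  then show ?thesis using disj[OF a uv(1,2)] by simp
qed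

lemma F4: "i < n \<Longrightarrow> dl i i = 0"
proof -
  assume a: "i < n"
  obtain u v where uv: "u \<in> A i" "v \<in> A i" "d u v = dl i i" using F2[OF a a] by blast
  have "dl i i \<le> d u u" using F1 a uv by blast
  moreover have "d u u = 0" using d0 cl_sub[OF Ai[OF a]] uv by blast
  moreover have "d u v \<ge> 0" using dnn cl_sub[OF Ai[OF a]] uv by blast
  ultimately show ?thesis using uv by simp
qed

lemma dl_sym: "i < n \<Longrightarrow> j < n \<Longrightarrow> dl i j = dl j i"
proof -
  assume a: "i < n" "j < n"
  obtain u v where uv: "u \<in> A i" "v \<in> A j" "d u v = dl i j" using F2[OF a] by blast
  obtain u' v' where uv': "u' \<in> A j" "v' \<in> A i" "d u' v' = dl j i" using F2[OF a(2) a(1)] by blast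
  have "dl j i \<le> d v u" using F1 a uv by blast
  moreover have "dl i j \<le> d v' u'" using F1 a uv' by blast
  moreover have "d v u = d u v" using dsym cl_sub[OF Ai] a uv by blast
  moreover have "d v' u' = d u' v'" using dsym cl_sub[OF Ai] a uv' by blast
  ultimately show ?thesis using uv uv' by simp
qed

lemma E1: "i < n \<Longrightarrow> m < n \<Longrightarrow> i \<noteq> m \<Longrightarrow> a \<in> A i \<Longrightarrow> \<exists>p\<in>A m. d a p = dl i m"
proof -
  assume a: "i < n" "m < n" "i \<noteq> m" "a \<in> A i"
  obtain u y where uy: "u \<in> A i" "y \<in> A m" "d u y = dl i m" using F2[OF a(1,2)] by blast
  have M: "a \<in> M" "u \<in> M" "y \<in> M" using cl_sub[OF Ai] a uy by blast+
  have "d a y \<le> d a u + d u y" using dtri M by blast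
  moreover have "d a u \<le> r" using cl_close[OF Ai[OF a(1)] a(4) uy(1)] .
  ultimately have ay1: "d a y \<le> r + dl i m" using uy by simp
  have ay2: "dl i m \<le> d a y" using F1 a uy by blast
  have ay3: "r < d a y" using disj a uy by blast
  have dlr: "dl i m > r" using F5 a by blast
  have aa: "d a a = 0" "d y y = 0" "d y a = d a y" using d0 dsym M by auto
  have ney: "a \<noteq> y" using ay3 aa rpos by auto
  define h where "h = (\<lambda>x. if x = a then dl i m else r)"
  have "\<exists>z\<in>M. \<forall>x\<in>{a, y}. d z x = h x"
  proof (rule ext_set)
    show "finite {a, y}" by simp
    show "{a, y} \<subseteq> M" using M by simp
    show "\<forall>x\<in>{a, y}. h x \<in> D" using F3 a rD by (simp add: h_def)
    show "\<forall>x\<in>{a, y}. h x > 0" using dlr rpos by (simp add: h_def)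
    show "\<forall>x\<in>{a, y}. \<forall>x'\<in>{a, y}. d x x' \<le> h x + h x'"
      using aa ay1 dlr rpos ney by (auto simp: h_def)
    show "\<forall>x\<in>{a, y}. \<forall>x'\<in>{a, y}. h x \<le> d x x' + h x'"
      using aa ay2 ay3 ney rpos dlr by (auto simp: h_def)
  qed
  then obtain z where z: "z \<in> M" "d z a = dl i m" "d z y = r" using ney by (auto simp: h_def)
  have "z \<in> A m" using cl_ext[OF Ai[OF a(2)] uy(2) z(1)] dsym[OF M(3) z(1)] z by simp
  moreover have "d a z = dl i m" using dsym[OF M(1) z(1)] z by simp
  ultimately show ?thesis by blast
qed

lemma T: "i < n \<Longrightarrow> j < n \<Longrightarrow> k < n \<Longrightarrow> dl i k \<le> dl i j + dl j k"
proof -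
  assume a: "i < n" "j < n" "k < n"
  show ?thesis
  proof (cases "i = j \<or> j = k")
    case True
    have "dl i k \<ge> 0" using F5[of i k] F4[of i] a rpos by (cases "i = k") auto
    then show ?thesis using True F4 a by auto
  next
    case False
    obtain u v where uv: "u \<in> A i" "v \<in> A j" "d u v = dl i j" using F2[OF a(1,2)] by blast
    obtain p where p: "p \<in> A k" "d v p = dl j k" using E1[OF a(2,3) _ uv(2)] False by blast
    have M: "u \<in> M" "v \<in> M" "p \<in> M" using cl_sub[OF Ai] a uv p by blast+
    have "dl i k \<le> d u p" using F1 a uv p by blast
    also have "\<dots> \<le> d u v + d v p" using dtri M by blast
    finally show ?thesis using uv p by simp
  qed
qed


definition ix where "ix x = (SOME i. i < n \<and> x \<in> A i)"

lemma ix_eq: "i < n \<Longrightarrow> x \<in> A i \<Longrightarrow> ix x = i"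
proof -
  assume a: "i < n" "x \<in> A i"
  have xM: "x \<in> M" using cl_sub[OF Ai[OF a(1)]] a by blast
  show ?thesis unfolding ix_def
  proof (rule someI2[of _ i])
    show "i < n \<and> x \<in> A i" using a by simp
  next
    fix j assume j: "j < n \<and> x \<in> A j"
    show "j = i"
    proof (rule ccontr)
      assume "j \<noteq> i"
      then have "d x x > r" using disj[of j i x x] j a by blast
      then show False using d0[OF xM] rpos by simp
    qed
  qed
qed

lemma E: "finite I \<Longrightarrow> I \<subseteq> {..<n} \<Longrightarrow> m < n \<Longrightarrow> m \<notin> I \<Longrightarrow> (\<forall>i\<in>I. a i \<in> A i) \<Longrightarrow>
   (\<forall>i\<in>I. \<forall>j\<in>I. d (a i) (a j) = dl i j) \<Longrightarrow> \<exists>p\<in>A m. \<forall>i\<in>I. d (a i) p = dl i m"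
proof (induction I rule: finite_psubset_induct)
  case (psubset I)
  note IH = psubset.IH
  have hI: "I \<subseteq> {..<n}" "m < n" "m \<notin> I" "\<forall>i\<in>I. a i \<in> A i" "\<forall>i\<in>I. \<forall>j\<in>I. d (a i) (a j) = dl i j"
    using psubset.prems by auto
  have In: "i < n" "i \<noteq> m" "a i \<in> A i" "a i \<in> M" if "i \<in> I" for i
    using hI that cl_sub[OF Ai] by blast+
  show ?case
  proof (cases "I = {}")
    case True then show ?thesis using cl_ne[OF Ai[OF hI(2)]] by blast
  next
    case False then obtain i0 where i0: "i0 \<in> I" by blast
    show ?thesis
    proof (cases "I = {i0}")
      case True
      obtain p where "p \<in> A m" "d (a i0) p = dl i0 m" using E1[OF In(1)[OF i0] hI(2) In(2)[OF i0] In(3)[OF i0]] by blast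
      then show ?thesis using True by auto
    next
      case False
      then obtain i1 where i1: "i1 \<in> I" "i1 \<noteq> i0" using i0 by blast
      have "\<exists>p\<in>A m. \<forall>i\<in>I-{i0}. d (a i) p = dl i m"
        by (rule IH) (use hI i0 psubset.hyps in auto)
      then obtain p where p: "p \<in> A m" "\<forall>i\<in>I-{i0}. d (a i) p = dl i m" by blast
      have "\<exists>p\<in>A m. \<forall>i\<in>I-{i1}. d (a i) p = dl i m"
        by (rule IH) (use hI i1 psubset.hyps in auto)
      then obtain p' where p': "p' \<in> A m" "\<forall>i\<in>I-{i1}. d (a i) p' = dl i m" by blast
      have pM: "p \<in> M" "p' \<in> M" using cl_sub[OF Ai[OF hI(2)]] p p' by blast+
      have pp: "d p p' \<le> r" "d p' p \<le> r" using cl_close[OF Ai[OF hI(2)]] p p' by blast+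
      have ap: "d (a i) p \<le> dl i m + r" if "i \<in> I" for i
      proof (cases "i = i0")
        case True
        have "d (a i) p \<le> d (a i) p' + d p' p" using dtri In(4)[OF that] pM by blast
        moreover have "d (a i) p' = dl i m" using p' True i1 that by auto
        ultimately show ?thesis using pp by simp
      next
        case False then show ?thesis using p that rpos by auto
      qed
      have ap': "d (a i) p' \<le> dl i m + r" if "i \<in> I" for i
      proof (cases "i = i1")
        case True
        have "d (a i) p' \<le> d (a i) p + d p p'" using dtri In(4)[OF that] pM by blast
        moreover have "d (a i) p = dl i m" using p True i1 that by auto
        ultimately show ?thesis using pp by simp
      next
        case False then show ?thesis using p' that rpos by auto
      qed
      have apl: "dl i m \<le> d (a i) p" "dl i m \<le> d (a i) p'" if "i \<in> I" for i
        using F1[OF In(1)[OF that] hI(2) In(3)[OF that]] p p' by blast+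
      have apr: "r < d (a i) p" "r < d (a i) p'" if "i \<in> I" for i
        using disj[OF In(1)[OF that] hI(2) In(2)[OF that] In(3)[OF that]] p p' by blast+
      have syp: "d p (a i) = d (a i) p" "d p' (a i) = d (a i) p'" if "i \<in> I" for i
        using dsym In(4)[OF that] pM by metis+
      have dlr: "dl i m > r" if "i \<in> I" for i using F5 In[OF that] hI(2) by blast
      have aa1: "d (a i) (a j) \<le> dl i m + dl j m" if "i \<in> I" "j \<in> I" for i j
        using T[OF In(1)[OF that(1)] hI(2) In(1)[OF that(2)]] dl_sym[OF hI(2) In(1)[OF that(2)]]
          hI(5) that by auto
      have aa2: "dl i m \<le> d (a i) (a j) + dl j m" if "i \<in> I" "j \<in> I" for i j
        using T[OF In(1)[OF that(1)] In(1)[OF that(2)] hI(2)] hI(5) that by auto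
      have p0: "d p p = 0" "d p' p' = 0" using d0 pM by auto
      define S where "S = a ` I \<union> {p, p'}"
      define h where "h = (\<lambda>x. if x \<in> A m then r else dl (ix x) m)"
      have hA: "h (a i) = dl i m" if "i \<in> I" for i
      proof -
        have "a i \<notin> A m"
        proof
          assume "a i \<in> A m"
          then have "d (a i) (a i) > r" using disj[OF In(1)[OF that] hI(2) In(2)[OF that] In(3)[OF that]] by blast
          then show False using d0[OF In(4)[OF that]] rpos by simp
        qed
        then show ?thesis unfolding h_def using ix_eq[OF In(1)[OF that] In(3)[OF that]] by simp
      qed
      have hp: "h p = r" "h p' = r" using p p' by (auto simp: h_def)
      have Sc: "(\<exists>i\<in>I. x = a i) \<or> x = p \<or> x = p'" if "x \<in> S" for x using that unfolding S_def by blast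
      have "\<exists>z\<in>M. \<forall>x\<in>S. d z x = h x"
      proof (rule ext_set)
        show "finite S" unfolding S_def using psubset.hyps by simp
        show "S \<subseteq> M" unfolding S_def using In(4) pM by blast
        show "\<forall>x\<in>S. h x \<in> D"
        proof
          fix x assume "x \<in> S"
          then show "h x \<in> D" using Sc hA hp rD F3 In(1) hI(2) by metis
        qed
        show "\<forall>x\<in>S. h x > 0"
        proof
          fix x assume "x \<in> S"
          then show "h x > 0" using Sc hA hp rpos dlr by (metis order.strict_trans)
        qed
        show "\<forall>x\<in>S. \<forall>y\<in>S. d x y \<le> h x + h y"
        proof (intro ballI)
          fix x y assume "x \<in> S" "y \<in> S"
          then have cx: "(\<exists>i\<in>I. x = a i) \<or> x = p \<or> x = p'" and cy: "(\<exists>i\<in>I. y = a i) \<or> y = p \<or> y = p'"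
            using Sc by auto
          show "d x y \<le> h x + h y"
          proof -
            { fix i j assume "i \<in> I" "j \<in> I" "x = a i" "y = a j"
              then have ?thesis using hA aa1 by auto }
            moreover
            { fix i assume i: "i \<in> I" "x = a i" "y = p \<or> y = p'"
              then have ?thesis using hA[OF i(1)] hp ap[OF i(1)] ap'[OF i(1)] by auto }
            moreover
            { fix i assume i: "i \<in> I" "y = a i" "x = p \<or> x = p'"
              then have ?thesis using hA[OF i(1)] hp ap[OF i(1)] ap'[OF i(1)] syp[OF i(1)] by auto }
            moreover
            { assume "x = p \<or> x = p'" "y = p \<or> y = p'"
              then have ?thesis using hp pp p0 rpos by auto }
            ultimately show ?thesis using cx cy by blast
          qed
        qed
        show "\<forall>x\<in>S. \<forall>y\<in>S. h x \<le> d x y + h y"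
        proof (intro ballI)
          fix x y assume "x \<in> S" "y \<in> S"
          then have cx: "(\<exists>i\<in>I. x = a i) \<or> x = p \<or> x = p'" and cy: "(\<exists>i\<in>I. y = a i) \<or> y = p \<or> y = p'"
            using Sc by auto
          show "h x \<le> d x y + h y"
          proof -
            { fix i j assume "i \<in> I" "j \<in> I" "x = a i" "y = a j"
              then have ?thesis using hA aa2 by auto }
            moreover
            { fix i assume i: "i \<in> I" "x = a i" "y = p \<or> y = p'"
              then have ?thesis using hA[OF i(1)] hp apl[OF i(1)] rpos by auto }
            moreover
            { fix i assume i: "i \<in> I" "y = a i" "x = p \<or> x = p'"
              then have ?thesis using hA[OF i(1)] hp apr[OF i(1)] syp[OF i(1)] dlr[OF i(1)] rpos by auto }
            moreover
            { assume "x = p \<or> x = p'" "y = p \<or> y = p'"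
              then have ?thesis using hp pp p0 pM dnn by auto }
            ultimately show ?thesis using cx cy by blast
          qed
        qed
      qed
      then obtain z where z: "z \<in> M" "\<forall>x\<in>S. d z x = h x" by blast
      have "d z p = r" using z hp unfolding S_def by auto
      then have zA: "z \<in> A m" using cl_ext[OF Ai[OF hI(2)] p(1) z(1)] dsym[OF pM(1) z(1)] by simp
      have "d (a i) z = dl i m" if "i \<in> I" for i
        using z(2) hA[OF that] dsym[OF In(4)[OF that] z(1)] that unfolding S_def by auto
      then show ?thesis using zA by blast
    qed
  qed
qed

lemma main: "m \<le> n \<Longrightarrow> \<exists>a. (\<forall>i<m. a i \<in> A i) \<and> (\<forall>i<m. \<forall>j<m. d (a i) (a j) = dl i j)"
proof (induction m)
  case 0 then show ?case by simp
next
  case (Suc m)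
  then obtain a where a: "\<forall>i<m. a i \<in> A i" "\<forall>i<m. \<forall>j<m. d (a i) (a j) = dl i j" by auto
  have mn: "m < n" using Suc by simp
  obtain p where p: "p \<in> A m" "\<forall>i\<in>{..<m}. d (a i) p = dl i m"
    using E[of "{..<m}" m a] a mn by auto
  have pM: "p \<in> M" using cl_sub[OF Ai[OF mn]] p by blast
  define a' where "a' = a(m := p)"
  have "\<forall>i<Suc m. a' i \<in> A i" using a p by (auto simp: a'_def less_Suc_eq)
  moreover have "\<forall>i<Suc m. \<forall>j<Suc m. d (a' i) (a' j) = dl i j"
  proof (intro allI impI)
    fix i j assume ij: "i < Suc m" "j < Suc m"
    have aM: "k < m \<Longrightarrow> a k \<in> M" for k using a cl_sub[OF Ai, of k] mn by auto
    show "d (a' i) (a' j) = dl i j"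
    proof (cases "i = m")
      case True
      show ?thesis
      proof (cases "j = m")
        case True then show ?thesis using \<open>i = m\<close> d0[OF pM] F4[OF mn] by (simp add: a'_def)
      next
        case False then have "j < m" using ij by simp
        then show ?thesis using \<open>i = m\<close> False p dsym[OF pM aM] dl_sym[OF mn] mn
          by (simp add: a'_def)
      qed
    next
      case False then have im: "i < m" using ij by simp
      show ?thesis
      proof (cases "j = m")
        case True then show ?thesis using im False p by (simp add: a'_def)
      next
        case False then have "j < m" using ij by simp
        then show ?thesis using im \<open>i \<noteq> m\<close> False a by (simp add: a'_def)
      qed
    qed
  qed
  ultimately show ?case by blast
qed

end

theorem lemma3p4:
  fixes D :: "real set" and M :: "'a set" and d :: "'a \<Rightarrow> 'a \<Rightarrow> real"
    and r :: real and n :: nat and A :: "nat \<Rightarrow> 'a set"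
  assumes "finite D" and "D \<subseteq> {0..}" and "0 \<in> D"
    and "universal_dist_set D"
    and "in_U D M d"
    and "r \<in> D" and "r > 0" and "{r<..2*r} \<inter> D = {}"
    and "\<forall>i<n. A i \<in> sim_classes M d r"
    and "inj_on A {..<n}"
  shows "\<exists>a. (\<forall>i<n. a i \<in> A i) \<and> (\<forall>i<n. \<forall>j<n. d (a i) (a j) = d_min d (A i) (A j))"
proof -
  interpret L3 D M d r n A using assms by unfold_locales auto
  show ?thesis using main[of n] unfolding dl_def by simp
qed

end
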